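(* Let $a<b$ and let $f:[a,b]\rightarrow\mathbb{R}$ be a differentiable mapping in $(a,b)$ such that $f'\in L^1[a,b]$ and $\gamma\le f'(x)\le \Gamma$ for all $x\in [a,b]$, where $\gamma,\Gamma$ are real constants. Put $S=\frac{f(b)-f(a)}{b-a}$. Then \[ \left|f\left(\frac{a+b}{2}\right)-\frac{1}{b-a}\int_{a}^{b}f(t)\,dt\right|\leq \frac{b-a}{2}(S-\gamma) \] and \[ \left|f\left(\frac{a+b}{2}\right)-\frac{1}{b-a}\int_{a}^{b}f(t)\,dt\right|\leq \frac{b-a}{2}(\Gamma-S). \] *)

theory Defs
  imports "HOL-Analysis.Analysis"
begin

end

theory Submission
  imports Defs
begin

lemma mono_mid:
  fixes g :: "real \<Rightarrow> real" and a b :: real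
  assumes ab: "a < b" and cg: "continuous_on {a..b} g"
    and mono: "\<And>x y. a \<le> x \<Longrightarrow> x \<le> y \<Longrightarrow> y \<le> b \<Longrightarrow> g x \<le> g y"
  shows "\<bar>g ((a + b) / 2) - (1 / (b - a)) * integral {a..b} g\<bar> \<le> (g b - g a) / 2"
proof -
  define m where "m = (a + b) / 2"
  have am: "a \<le> m" "m \<le> b" using ab by (auto simp: m_def)
  have ig: "g integrable_on {a..b}" using cg integrable_continuous_real by blast
  have i1: "g integrable_on {a..m}" using integrable_subinterval_real[OF ig] am by auto
  have i2: "g integrable_on {m..b}" using integrable_subinterval_real[OF ig] am by auto
  have comb: "integral {a..m} g + integral {m..b} g = integral {a..b} g"
    using Henstock_Kurzweil_Integration.integral_combine[OF am ig] .
  have l1: "integral {a..m} g \<ge> (m - a) * g a"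
  proof -
    have "integral {a..m} (\<lambda>x. g a) \<le> integral {a..m} g"
      by (rule integral_le) (use i1 mono am in auto)
    thus ?thesis using am by simp
  qed
  have u1: "integral {a..m} g \<le> (m - a) * g m"
  proof -
    have "integral {a..m} g \<le> integral {a..m} (\<lambda>x. g m)"
      by (rule integral_le) (use i1 mono am in auto)
    thus ?thesis using am by simp
  qed
  have l2: "integral {m..b} g \<ge> (b - m) * g m"
  proof -
    have "integral {m..b} (\<lambda>x. g m) \<le> integral {m..b} g"
      by (rule integral_le) (use i2 mono am in auto)
    thus ?thesis using am by simp
  qed
  have u2: "integral {m..b} g \<le> (b - m) * g b"
  proof -
    have "integral {m..b} g \<le> integral {m..b} (\<lambda>x. g b)"
      by (rule integral_le) (use i2 mono am in auto)
    thus ?thesis using am by simp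
  qed
  have ma: "m - a = (b - a) / 2" "b - m = (b - a) / 2" by (simp_all add: m_def field_simps)
  define I where "I = integral {a..b} g"
  have "(b - a) / 2 * (g a + g m) \<le> I" "I \<le> (b - a) / 2 * (g m + g b)"
    using l1 u1 l2 u2 comb ma by (auto simp: I_def algebra_simps)
  hence "(g a + g m) / 2 \<le> I / (b - a)" "I / (b - a) \<le> (g m + g b) / 2"
    using ab by (auto simp: field_simps)
  hence "\<bar>g m - I / (b - a)\<bar> \<le> (g b - g a) / 2" using mono[of a m] mono[of m b] am ab
    by (auto simp: abs_if)
  thus ?thesis by (simp add: m_def I_def)
qed

theorem corollary2p3:
  fixes f f' :: "real \<Rightarrow> real" and a b \<gamma> \<Gamma> S :: real
  assumes "a < b"
    and "continuous_on {a..b} f"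
    and "\<And>x. x \<in> {a<..<b} \<Longrightarrow> (f has_real_derivative f' x) (at x)"
    and "f' absolutely_integrable_on {a..b}"
    and "\<And>x. x \<in> {a..b} \<Longrightarrow> \<gamma> \<le> f' x \<and> f' x \<le> \<Gamma>"
    and "S = (f b - f a) / (b - a)"
  shows "\<bar>f ((a + b) / 2) - (1 / (b - a)) * integral {a..b} f\<bar> \<le> (b - a) / 2 * (S - \<gamma>) \<and>
         \<bar>f ((a + b) / 2) - (1 / (b - a)) * integral {a..b} f\<bar> \<le> (b - a) / 2 * (\<Gamma> - S)"
proof -
  note ab = assms(1)
  have ifa: "f integrable_on {a..b}" using assms(2) integrable_continuous_real by blast
  define L where "L = integral {a..b} f"
  have lin: "integral {a..b} (\<lambda>x. x) = (b^2 - a^2) / 2"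
    using integral_ident[of a b] ab by simp
  have idint: "(\<lambda>x::real. x) integrable_on {a..b}" by (simp add: integrable_continuous_real)
  define g1 where "g1 = (\<lambda>x. f x - \<gamma> * x)"
  have c1: "continuous_on {a..b} g1" unfolding g1_def
    by (intro continuous_intros assms(2))
  have m1: "g1 x \<le> g1 y" if "a \<le> x" "x \<le> y" "y \<le> b" for x y
  proof (rule DERIV_nonneg_imp_increasing_open[OF that(2)])
    fix t assume "x < t" "t < y"
    hence t: "t \<in> {a<..<b}" using that by auto
    show "\<exists>d. DERIV g1 t :> d \<and> 0 \<le> d"
      using assms(3)[OF t] assms(5)[of t] t unfolding g1_def
      by (intro exI[of _ "f' t - \<gamma>"]) (auto intro!: derivative_eq_intros)
  next
    show "continuous_on {x..y} g1" using c1 by (rule continuous_on_subset) (use that in auto)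
  qed
  have i1: "integral {a..b} g1 = L - \<gamma> * ((b^2 - a^2) / 2)"
  proof -
    have "integral {a..b} g1 = integral {a..b} f - integral {a..b} (\<lambda>x. \<gamma> * x)"
      unfolding g1_def by (rule integral_diff[OF ifa]) (simp add: integrable_continuous_real continuous_intros)
    thus ?thesis using lin by (simp add: L_def abs_minus_commute)
  qed
  note r1 = mono_mid[OF ab c1 m1]
  define g2 where "g2 = (\<lambda>x. \<Gamma> * x - f x)"
  have c2: "continuous_on {a..b} g2" unfolding g2_def
    by (intro continuous_intros assms(2))
  have m2: "g2 x \<le> g2 y" if "a \<le> x" "x \<le> y" "y \<le> b" for x y
  proof (rule DERIV_nonneg_imp_increasing_open[OF that(2)])
    fix t assume "x < t" "t < y"
    hence t: "t \<in> {a<..<b}" using that by auto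
    show "\<exists>d. DERIV g2 t :> d \<and> 0 \<le> d"
      using assms(3)[OF t] assms(5)[of t] t unfolding g2_def
      by (intro exI[of _ "\<Gamma> - f' t"]) (auto intro!: derivative_eq_intros)
  next
    show "continuous_on {x..y} g2" using c2 by (rule continuous_on_subset) (use that in auto)
  qed
  have i2: "integral {a..b} g2 = \<Gamma> * ((b^2 - a^2) / 2) - L"
  proof -
    have "integral {a..b} g2 = integral {a..b} (\<lambda>x. \<Gamma> * x) - integral {a..b} f"
      unfolding g2_def by (rule integral_diff[OF _ ifa]) (simp add: integrable_continuous_real continuous_intros)
    thus ?thesis using lin by (simp add: L_def abs_minus_commute)
  qed
  note r2 = mono_mid[OF ab c2 m2]
  have key: "(b^2 - a^2) / 2 / (b - a) = (a + b) / 2" using ab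
    by (simp add: field_simps power2_eq_square)
  have e1: "g1 ((a + b) / 2) - 1 / (b - a) * integral {a..b} g1 = f ((a + b) / 2) - 1 / (b - a) * L"
    unfolding i1 using ab key by (simp add: g1_def field_simps power2_eq_square)
  have e2: "g2 ((a + b) / 2) - 1 / (b - a) * integral {a..b} g2 = -(f ((a + b) / 2) - 1 / (b - a) * L)"
    unfolding i2 using ab key by (simp add: g2_def field_simps power2_eq_square)
  have s1: "(g1 b - g1 a) / 2 = (b - a) / 2 * (S - \<gamma>)"
    unfolding g1_def assms(6) using ab by (simp add: field_simps)
  have s2: "(g2 b - g2 a) / 2 = (b - a) / 2 * (\<Gamma> - S)"
    unfolding g2_def assms(6) using ab by (simp add: field_simps)
  show ?thesis using r1 r2 e1 e2 s1 s2 by (simp add: L_def abs_minus_commute)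
qed

end
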